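(* Let $S\subseteq\mathbb R^n$ be a finite set of points and $I=\mathcal I(S)$. Then $I$ is $\mathrm{TH}_1$-exact if and only if for each facet $F$ of the polytope $\operatorname{conv}(S)$ (facets taken relative to the affine hull of $S$) there exists a hyperplane $H$ of the affine hull of $S$ parallel to the affine hull of $F$ such that $S\subseteq F\cup H$; i.e. if and only if $\operatorname{conv}(S)$ is a $2$-level polytope with vertex set $S$.
   Context: For $S\subseteq\mathbb R^n$, $\mathcal I(S)$ is the ideal of all polynomials vanishing on $S$, and $\mathcal V_{\mathbb R}(I)$ is the real zero set of an ideal $I$. $\mathbb{R}[\mathbf x]_k$ denotes the polynomials of degree at most $k$. A polynomial $h$ is $k$-sos modulo $I$ if there are $g_1,\dots,g_r\in\mathbb{R}[\mathbf x]_k$ with $h-\sum_i g_i^2\in I$. The $k$-th theta body is $\mathrm{TH}_k(I)=\{p\in\mathbb R^n: l(p)\ge 0$ for every $l\in\mathbb{R}[\mathbf x]_1$ that is $k$-sos modulo $I\}$. $I$ is $\mathrm{TH}_k$-exact if $\mathrm{TH}_k(I)=\operatorname{cl}(\operatorname{conv}(\mathcal V_{\mathbb R}(I)))$. A polytope $P$ is $k$-level if for every facet $F$ of $P$ and the supporting hyperplane $H$ of $F$ there are $k-1$ hyperplanes $H_1,\dots,H_{k-1}$ parallel to $H$ such that all vertices of $P$ lie in $H\cup H_1\cup\dots\cup H_{k-1}$. *)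

theory Defs
  imports "HOL-Analysis.Analysis"
begin

text \<open>Real polynomials in the coordinates of real^'n, represented by their polynomial
  functions (faithful over the infinite field of reals).\<close>

definition monom_fun :: "('n::finite \<Rightarrow> nat) \<Rightarrow> real^'n \<Rightarrow> real" where
  "monom_fun \<alpha> = (\<lambda>x. \<Prod>i\<in>UNIV. (x $ i) ^ \<alpha> i)"

definition mdeg :: "('n::finite \<Rightarrow> nat) \<Rightarrow> nat" where
  "mdeg \<alpha> = (\<Sum>i\<in>UNIV. \<alpha> i)"

definition poly_deg_le :: "nat \<Rightarrow> (real^'n::finite \<Rightarrow> real) \<Rightarrow> bool" where
  "poly_deg_le k f \<longleftrightarrow> (\<exists>A c. finite A \<and> (\<forall>\<alpha>\<in>A. mdeg \<alpha> \<le> k) \<and>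
      f = (\<lambda>x. \<Sum>\<alpha>\<in>A. c \<alpha> * monom_fun \<alpha> x))"

definition is_poly :: "(real^'n::finite \<Rightarrow> real) \<Rightarrow> bool" where
  "is_poly f \<longleftrightarrow> (\<exists>k. poly_deg_le k f)"

definition vanishing_ideal :: "(real^'n::finite) set \<Rightarrow> (real^'n \<Rightarrow> real) set" where
  "vanishing_ideal S = {f. is_poly f \<and> (\<forall>x\<in>S. f x = 0)}"

definition real_zeros :: "(real^'n::finite \<Rightarrow> real) set \<Rightarrow> (real^'n) set" where
  "real_zeros I = {x. \<forall>f\<in>I. f x = 0}"

definition k_sos_mod :: "nat \<Rightarrow> (real^'n::finite \<Rightarrow> real) set \<Rightarrow> (real^'n \<Rightarrow> real) \<Rightarrow> bool" where
  "k_sos_mod k I h \<longleftrightarrow> (\<exists>gs. (\<forall>g\<in>set gs. poly_deg_le k g) \<and>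
      (\<lambda>x. h x - (\<Sum>g\<leftarrow>gs. (g x)^2)) \<in> I)"

definition theta_body :: "nat \<Rightarrow> (real^'n::finite \<Rightarrow> real) set \<Rightarrow> (real^'n) set" where
  "theta_body k I = {p. \<forall>l. poly_deg_le 1 l \<and> k_sos_mod k I l \<longrightarrow> l p \<ge> 0}"

definition TH_exact :: "nat \<Rightarrow> (real^'n::finite \<Rightarrow> real) set \<Rightarrow> bool" where
  "TH_exact k I \<longleftrightarrow> theta_body k I = closure (convex hull (real_zeros I))"

end

theory Submission
  imports Defs
begin


lemma poly_indexed:
  fixes \<alpha> :: "'i \<Rightarrow> ('n::finite \<Rightarrow> nat)"
  assumes "finite I" "\<forall>i\<in>I. mdeg (\<alpha> i) \<le> k"
  shows "poly_deg_le k (\<lambda>x::real^'n. \<Sum>i\<in>I. c i * monom_fun (\<alpha> i) x)"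
proof -
  define d where "d \<beta> = (\<Sum>i\<in>{i\<in>I. \<alpha> i = \<beta>}. c i)" for \<beta>
  have "(\<lambda>x::real^'n. \<Sum>i\<in>I. c i * monom_fun (\<alpha> i) x) = (\<lambda>x. \<Sum>\<beta>\<in>\<alpha> ` I. d \<beta> * monom_fun \<beta> x)"
  proof
    fix x :: "real^'n"
    have "(\<Sum>i\<in>I. c i * monom_fun (\<alpha> i) x) = (\<Sum>\<beta>\<in>\<alpha> ` I. \<Sum>i\<in>{i\<in>I. \<alpha> i = \<beta>}. c i * monom_fun (\<alpha> i) x)"
      using assms(1) by (rule sum.image_gen)
    also have "\<dots> = (\<Sum>\<beta>\<in>\<alpha> ` I. d \<beta> * monom_fun \<beta> x)"
      unfolding d_def sum_distrib_right by (intro sum.cong refl) auto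
    finally show "(\<Sum>i\<in>I. c i * monom_fun (\<alpha> i) x) = (\<Sum>\<beta>\<in>\<alpha> ` I. d \<beta> * monom_fun \<beta> x)" .
  qed
  then show ?thesis unfolding poly_deg_le_def using assms by blast
qed

lemma poly_const: "poly_deg_le k (\<lambda>x::real^'n::finite. c)"
proof -
  have "(\<lambda>x::real^'n. c) = (\<lambda>x. \<Sum>i\<in>{()}. c * monom_fun (\<lambda>j. 0) x)"
    by (simp add: monom_fun_def)
  moreover have "poly_deg_le k (\<lambda>x::real^'n. \<Sum>i\<in>{()}. c * monom_fun (\<lambda>j. 0) x)"
    by (rule poly_indexed) (auto simp: mdeg_def)
  ultimately show ?thesis by simp
qed

lemma poly_add:
  assumes "poly_deg_le k f" "poly_deg_le k g"
  shows "poly_deg_le k (\<lambda>x. f x + g x)"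
proof -
  obtain A c where A: "finite A" "\<forall>\<alpha>\<in>A. mdeg \<alpha> \<le> k" "f = (\<lambda>x. \<Sum>\<alpha>\<in>A. c \<alpha> * monom_fun \<alpha> x)"
    using assms(1) unfolding poly_deg_le_def by blast
  obtain B d where B: "finite B" "\<forall>\<alpha>\<in>B. mdeg \<alpha> \<le> k" "g = (\<lambda>x. \<Sum>\<alpha>\<in>B. d \<alpha> * monom_fun \<alpha> x)"
    using assms(2) unfolding poly_deg_le_def by blast
  have "poly_deg_le k (\<lambda>x. \<Sum>i\<in>A <+> B. case_sum c d i * monom_fun (case_sum id id i) x)"
    by (rule poly_indexed) (use A B in auto)
  moreover have "(\<lambda>x. \<Sum>i\<in>A <+> B. case_sum c d i * monom_fun (case_sum id id i) x) = (\<lambda>x. f x + g x)"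
    using A B by (simp add: sum.Plus o_def)
  ultimately show ?thesis by simp
qed

lemma poly_mult:
  assumes "poly_deg_le k f" "poly_deg_le m g"
  shows "poly_deg_le (k + m) (\<lambda>x. f x * g x)"
proof -
  obtain A c where A: "finite A" "\<forall>\<alpha>\<in>A. mdeg \<alpha> \<le> k" "f = (\<lambda>x. \<Sum>\<alpha>\<in>A. c \<alpha> * monom_fun \<alpha> x)"
    using assms(1) unfolding poly_deg_le_def by blast
  obtain B d where B: "finite B" "\<forall>\<alpha>\<in>B. mdeg \<alpha> \<le> m" "g = (\<lambda>x. \<Sum>\<alpha>\<in>B. d \<alpha> * monom_fun \<alpha> x)"
    using assms(2) unfolding poly_deg_le_def by blast
  have md: "mdeg (\<lambda>i. \<alpha> i + \<beta> i) = mdeg \<alpha> + mdeg \<beta>" for \<alpha> \<beta> :: "'a \<Rightarrow> nat"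
    by (simp add: mdeg_def sum.distrib)
  have mm: "monom_fun (\<lambda>i. \<alpha> i + \<beta> i) x = monom_fun \<alpha> x * monom_fun \<beta> x" for \<alpha> \<beta> x
    by (simp add: monom_fun_def power_add prod.distrib)
  have "poly_deg_le (k+m) (\<lambda>x. \<Sum>p\<in>A \<times> B. (c (fst p) * d (snd p)) * monom_fun ((\<lambda>p i. fst p i + snd p i) p) x)"
    by (rule poly_indexed) (use A B md in \<open>auto intro: add_mono\<close>)
  moreover have "(\<lambda>x. \<Sum>p\<in>A \<times> B. (c (fst p) * d (snd p)) * monom_fun ((\<lambda>p i. fst p i + snd p i) p) x) = (\<lambda>x. f x * g x)"
  proof
    fix x
    show "(\<Sum>p\<in>A \<times> B. (c (fst p) * d (snd p)) * monom_fun ((\<lambda>p i. fst p i + snd p i) p) x) = f x * g x"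
      unfolding A(3) B(3) mm sum_product sum.cartesian_product
      by (intro sum.cong refl) (auto simp: algebra_simps)
  qed
  ultimately show ?thesis by simp
qed

lemma poly_mono: "k \<le> m \<Longrightarrow> poly_deg_le k f \<Longrightarrow> poly_deg_le m f"
  unfolding poly_deg_le_def by (metis order_trans)

lemma poly_scale: "poly_deg_le k f \<Longrightarrow> poly_deg_le k (\<lambda>x. c * f x)"
  using poly_mult[OF poly_const[of 0 c], of k f] by simp

lemma poly_affine: "poly_deg_le 1 (\<lambda>x::real^'n::finite. a \<bullet> x + b)"
proof -
  have "poly_deg_le 1 (\<lambda>x::real^'n. \<Sum>j\<in>UNIV. (a $ j) * monom_fun (\<lambda>i. if i = j then 1 else 0) x)"
    by (rule poly_indexed) (auto simp: mdeg_def)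
  moreover have "(\<lambda>x::real^'n. \<Sum>j\<in>UNIV. (a $ j) * monom_fun (\<lambda>i. if i = j then 1 else 0) x) = (\<lambda>x. a \<bullet> x)"
    by (simp add: monom_fun_def inner_vec_def power_0 if_distrib prod.If_cases cong: if_cong)
  ultimately have "poly_deg_le 1 (\<lambda>x::real^'n. a \<bullet> x)" by simp
  from poly_add[OF this poly_const] show ?thesis .
qed

definition affn :: "(real^'n::finite \<Rightarrow> real) \<Rightarrow> bool" where
  "affn f \<longleftrightarrow> (\<exists>a b. f = (\<lambda>x. a \<bullet> x + b))"

lemma monom_affn:
  fixes \<alpha> :: "'n::finite \<Rightarrow> nat"
  assumes "mdeg \<alpha> \<le> 1"
  shows "affn (monom_fun \<alpha>)"
proof (cases "\<forall>i. \<alpha> i = 0")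
  case True
  then have "monom_fun \<alpha> = (\<lambda>x. 0 \<bullet> x + 1)" by (simp add: monom_fun_def)
  then show ?thesis unfolding affn_def by blast
next
  case False
  then obtain j where j: "\<alpha> j \<noteq> 0" by blast
  have "mdeg \<alpha> = \<alpha> j + (\<Sum>i\<in>UNIV - {j}. \<alpha> i)"
    unfolding mdeg_def by (simp add: sum.remove)
  with assms j have aj: "\<alpha> j = 1" and rest: "(\<Sum>i\<in>UNIV - {j}. \<alpha> i) = 0" by linarith+
  from rest have r0: "\<forall>i\<in>UNIV - {j}. \<alpha> i = 0" by simp
  have "monom_fun \<alpha> x = x $ j" for x :: "real^'n"
  proof -
    have "monom_fun \<alpha> x = (x $ j) ^ \<alpha> j * (\<Prod>i\<in>UNIV - {j}. (x $ i) ^ \<alpha> i)"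
      unfolding monom_fun_def by (simp add: prod.remove)
    also have "(\<Prod>i\<in>UNIV - {j}. (x $ i) ^ \<alpha> i) = 1" using r0 by simp
    finally show ?thesis using aj by simp
  qed
  then have "monom_fun \<alpha> = (\<lambda>x. axis j 1 \<bullet> x + 0)" by (auto simp: inner_axis')
  then show ?thesis unfolding affn_def by blast
qed

lemma affn_sum: fixes f :: "'b \<Rightarrow> real^'n::finite \<Rightarrow> real" shows "finite A \<Longrightarrow> (\<forall>\<alpha>\<in>A. affn (f \<alpha>)) \<Longrightarrow> affn (\<lambda>x. \<Sum>\<alpha>\<in>A. c \<alpha> * f \<alpha> x)"
proof (induction A rule: finite_induct)
  case empty
  have "(\<lambda>x::real^'n. \<Sum>\<alpha>\<in>{}. c \<alpha> * f \<alpha> x) = (\<lambda>x. 0 \<bullet> x + 0)" by simp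
  then show ?case unfolding affn_def by blast
next
  case (insert a A)
  then obtain u v where uv: "(\<lambda>x. \<Sum>\<alpha>\<in>A. c \<alpha> * f \<alpha> x) = (\<lambda>x. u \<bullet> x + v)" unfolding affn_def by blast
  obtain p q where pq: "f a = (\<lambda>x. p \<bullet> x + q)" using insert unfolding affn_def by blast
  have "(\<lambda>x. \<Sum>\<alpha>\<in>insert a A. c \<alpha> * f \<alpha> x) = (\<lambda>x. (c a *\<^sub>R p + u) \<bullet> x + (c a * q + v))"
  proof
    fix x
    have "(\<Sum>\<alpha>\<in>A. c \<alpha> * f \<alpha> x) = u \<bullet> x + v" using uv by metis
    then show "(\<Sum>\<alpha>\<in>insert a A. c \<alpha> * f \<alpha> x) = (c a *\<^sub>R p + u) \<bullet> x + (c a * q + v)"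
      using insert pq by (simp add: inner_add_left algebra_simps)
  qed
  then show ?case unfolding affn_def by blast
qed

lemma deg1_affn: "poly_deg_le 1 f \<Longrightarrow> affn f"
  unfolding poly_deg_le_def using affn_sum monom_affn by metis

lemma is_poly_const: "is_poly (\<lambda>x::real^'n::finite. c)"
  unfolding is_poly_def using poly_const by blast

lemma is_poly_add: "is_poly f \<Longrightarrow> is_poly g \<Longrightarrow> is_poly (\<lambda>x. f x + g x)"
  unfolding is_poly_def by (metis poly_add poly_mono max.cobounded1 max.cobounded2)

lemma is_poly_mult: "is_poly f \<Longrightarrow> is_poly g \<Longrightarrow> is_poly (\<lambda>x. f x * g x)"
  unfolding is_poly_def by (metis poly_mult)

lemma is_poly_diff: "is_poly f \<Longrightarrow> is_poly g \<Longrightarrow> is_poly (\<lambda>x. f x - g x)"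
proof -
  assume "is_poly f" "is_poly g"
  then have "is_poly (\<lambda>x. f x + (-1) * g x)"
    by (intro is_poly_add is_poly_mult is_poly_const)
  then show ?thesis by simp
qed

lemma is_poly_affine: "is_poly (\<lambda>x::real^'n::finite. a \<bullet> x + b)"
  unfolding is_poly_def using poly_affine by blast

lemma is_poly_prod: "finite A \<Longrightarrow> (\<forall>a\<in>A. is_poly (f a)) \<Longrightarrow> is_poly (\<lambda>x. \<Prod>a\<in>A. f a x)"
  by (induction A rule: finite_induct) (auto intro: is_poly_mult is_poly_const)

lemma is_poly_sum: "finite A \<Longrightarrow> (\<forall>a\<in>A. is_poly (f a)) \<Longrightarrow> is_poly (\<lambda>x. \<Sum>a\<in>A. f a x)"
  by (induction A rule: finite_induct) (auto intro: is_poly_add is_poly_const)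

lemma real_zeros_vanishing:
  fixes S :: "(real^'n::finite) set"
  assumes "finite S"
  shows "real_zeros (vanishing_ideal S) = S"
proof
  show "S \<subseteq> real_zeros (vanishing_ideal S)"
    unfolding real_zeros_def vanishing_ideal_def by auto
next
  show "real_zeros (vanishing_ideal S) \<subseteq> S"
  proof
    fix z assume z: "z \<in> real_zeros (vanishing_ideal S)"
    define f where "f = (\<lambda>x::real^'n. \<Prod>s\<in>S. (\<Sum>i\<in>UNIV. (x $ i - s $ i) * (x $ i - s $ i)))"
    have cc: "is_poly (\<lambda>x::real^'n. x $ i - s $ i)" for i s
    proof -
      have "is_poly (\<lambda>x::real^'n. axis i 1 \<bullet> x + (- s $ i))" by (rule is_poly_affine)
      then show ?thesis by (simp add: inner_axis')
    qed
    have "is_poly f" unfolding f_def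
      by (intro is_poly_prod is_poly_sum assms ballI is_poly_mult cc) auto
    moreover have "\<forall>x\<in>S. f x = 0" unfolding f_def using assms by (auto intro!: bexI)
    ultimately have "f \<in> vanishing_ideal S" unfolding vanishing_ideal_def by auto
    with z have "f z = 0" unfolding real_zeros_def by auto
    then obtain s where s: "s \<in> S" "(\<Sum>i\<in>UNIV. (z $ i - s $ i) * (z $ i - s $ i)) = 0"
      unfolding f_def using assms by auto
    then have "\<forall>i. z $ i - s $ i = 0"
      by (subst (asm) sum_nonneg_eq_0_iff) auto
    then have "z = s" by (simp add: vec_eq_iff)
    with s show "z \<in> S" by simp
  qed
qed



lemma affn_comb:
  assumes "affn h" "finite A" "sum \<mu> A = 1"
  shows "h (\<Sum>v\<in>A. \<mu> v *\<^sub>R v) = (\<Sum>v\<in>A. \<mu> v * h v)"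
proof -
  obtain a b where h: "h = (\<lambda>x. a \<bullet> x + b)" using assms(1) unfolding affn_def by blast
  have "(\<Sum>v\<in>A. \<mu> v * h v) = (\<Sum>v\<in>A. \<mu> v * (a \<bullet> v)) + (\<Sum>v\<in>A. \<mu> v) * b"
    by (simp add: h algebra_simps sum.distrib sum_distrib_left)
  then show ?thesis using assms(3) by (simp add: h inner_sum_right)
qed

lemma sos_nonneg_S:
  assumes "k_sos_mod k (vanishing_ideal S) l" "s \<in> S"
  shows "l s \<ge> 0"
proof -
  obtain gs where "(\<lambda>x. l x - (\<Sum>g\<leftarrow>gs. (g x)^2)) \<in> vanishing_ideal S"
    using assms(1) unfolding k_sos_mod_def by blast
  then have "l s = (\<Sum>g\<leftarrow>gs. (g s)^2)" using assms(2) unfolding vanishing_ideal_def by auto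
  also have "\<dots> \<ge> 0" by (induction gs) auto
  finally show ?thesis by simp
qed

lemma conv_subset_theta:
  fixes S :: "(real^'n::finite) set"
  shows "convex hull S \<subseteq> theta_body k (vanishing_ideal S)"
proof
  fix p assume p: "p \<in> convex hull S"
  show "p \<in> theta_body k (vanishing_ideal S)"
    unfolding theta_body_def
  proof (intro CollectI allI impI, elim conjE)
    fix l assume l1: "poly_deg_le 1 l" and ls: "k_sos_mod k (vanishing_ideal S) l"
    obtain a b where ab: "l = (\<lambda>x. a \<bullet> x + b)" using deg1_affn[OF l1] unfolding affn_def by blast
    have "S \<subseteq> {x. a \<bullet> x + b \<ge> 0}" using sos_nonneg_S[OF ls] ab by auto
    moreover have "convex {x. a \<bullet> x + b \<ge> 0}"
    proof -
      have "{x. a \<bullet> x + b \<ge> 0} = {x. (-a) \<bullet> x \<le> b}" by (auto simp: inner_minus_left)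
      then show ?thesis using convex_halfspace_le by metis
    qed
    ultimately have "convex hull S \<subseteq> {x. a \<bullet> x + b \<ge> 0}" by (rule hull_minimal)
    with p show "0 \<le> l p" using ab by auto
  qed
qed

lemma TH_exact_iff:
  fixes S :: "(real^'n::finite) set"
  assumes "finite S"
  shows "TH_exact 1 (vanishing_ideal S) \<longleftrightarrow> theta_body 1 (vanishing_ideal S) \<subseteq> convex hull S"
proof -
  have "closure (convex hull S) = convex hull S"
    using assms by (simp add: compact_imp_closed finite_imp_compact_convex_hull)
  then show ?thesis unfolding TH_exact_def real_zeros_vanishing[OF assms]
    using conv_subset_theta[of S 1] by auto
qed

lemma vanish_sos:
  assumes "is_poly l" "\<forall>s\<in>S. l s = 0"
  shows "k_sos_mod k (vanishing_ideal S) l"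
  unfolding k_sos_mod_def vanishing_ideal_def
  by (rule exI[of _ "[]"]) (use assms in auto)

lemma two_valued_sos:
  fixes S :: "(real^'n::finite) set"
  assumes "\<forall>s\<in>S. a \<bullet> s + b = 0 \<or> a \<bullet> s + b = \<kappa>" "\<forall>s\<in>S. a \<bullet> s + b \<ge> 0"
  shows "k_sos_mod 1 (vanishing_ideal S) (\<lambda>x. a \<bullet> x + b)"
proof (cases "\<kappa> > 0")
  case True
  define g where "g = (\<lambda>x::real^'n. (1 / sqrt \<kappa>) * (a \<bullet> x + b))"
  have g1: "poly_deg_le 1 g" unfolding g_def by (intro poly_scale poly_affine)
  have gp: "is_poly g" using g1 unfolding is_poly_def by blast
  have "(\<lambda>x. a \<bullet> x + b - (\<Sum>h\<leftarrow>[g]. (h x)^2)) \<in> vanishing_ideal S"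
    unfolding vanishing_ideal_def
  proof (intro CollectI conjI ballI)
    show "is_poly (\<lambda>x. a \<bullet> x + b - (\<Sum>h\<leftarrow>[g]. (h x)^2))"
      by (simp add: power2_eq_square) (intro is_poly_diff is_poly_affine is_poly_mult gp)
  next
    fix s assume "s \<in> S"
    then show "a \<bullet> s + b - (\<Sum>h\<leftarrow>[g]. (h s)^2) = 0"
    proof -
      have "a \<bullet> s + b = 0 \<or> a \<bullet> s + b = \<kappa>" using assms \<open>s \<in> S\<close> by auto
      then show ?thesis using True by (auto simp: g_def power_mult_distrib power_divide power2_eq_square)
    qed
  qed
  then show ?thesis unfolding k_sos_mod_def using g1 by (intro exI[of _ "[g]"]) auto
next
  case False
  then have "\<forall>s\<in>S. a \<bullet> s + b = 0" using assms by force
  then show ?thesis by (intro vanish_sos is_poly_affine)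
qed



lemma theta_in_affine_hull:
  fixes S :: "(real^'n::finite) set"
  assumes "S \<noteq> {}" "p \<in> theta_body 1 (vanishing_ideal S)"
  shows "p \<in> affine hull S"
proof (rule ccontr)
  assume np: "p \<notin> affine hull S"
  obtain s0 where s0: "s0 \<in> S" using assms by blast
  obtain a c where ac: "a \<bullet> p < c" "\<forall>x\<in>affine hull S. c < a \<bullet> x"
  proof -
    have "convex (affine hull S)" by (rule convex_affine_hull)
    moreover have "closed (affine hull S)" by (rule closed_affine_hull)
    ultimately have "\<exists>a c. a \<bullet> p < c \<and> (\<forall>x\<in>affine hull S. c < a \<bullet> x)"
      using np by (rule separating_hyperplane_closed_point)
    then show ?thesis using that by blast
  qed
  have s0h: "s0 \<in> affine hull S" using s0 by (rule hull_inc)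
  have const: "a \<bullet> x = a \<bullet> s0" if x: "x \<in> affine hull S" for x
  proof (rule ccontr)
    assume ne: "a \<bullet> x \<noteq> a \<bullet> s0"
    define t where "t = (c - a \<bullet> s0 - 1) / (a \<bullet> x - a \<bullet> s0)"
    have "s0 + t *\<^sub>R (x - s0) \<in> affine hull S"
      by (rule mem_affine_3_minus[OF affine_affine_hull s0h x s0h])
    moreover have "a \<bullet> (s0 + t *\<^sub>R (x - s0)) = a \<bullet> s0 + t * (a \<bullet> x - a \<bullet> s0)"
      by (simp add: inner_add_right inner_diff_right right_diff_distrib)
    moreover have "t * (a \<bullet> x - a \<bullet> s0) = c - a \<bullet> s0 - 1"
      using ne by (simp add: t_def)
    ultimately have "c < c - 1" using ac(2) by fastforce
    then show False by simp
  qed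
  define l where "l = (\<lambda>x::real^'n. a \<bullet> x + (- (a \<bullet> s0)))"
  have "k_sos_mod 1 (vanishing_ideal S) l"
    unfolding l_def using const hull_inc[of _ S affine]
    by (intro vanish_sos is_poly_affine ballI) simp
  moreover have "poly_deg_le 1 l" unfolding l_def by (rule poly_affine)
  ultimately have "l p \<ge> 0" using assms(2) unfolding theta_body_def by blast
  moreover have "c < a \<bullet> s0" using ac s0h by blast
  ultimately show False using ac unfolding l_def by simp
qed

lemma backward:
  fixes S :: "(real^'n::finite) set"
  assumes fin: "finite S"
    and rhs: "\<forall>F. F facet_of (convex hull S) \<longrightarrow>
       (\<exists>H. (\<exists>v. H = (\<lambda>x. v + x) ` (affine hull F)) \<and> H \<subseteq> affine hull S \<and>
            S \<subseteq> F \<union> H)"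
  shows "theta_body 1 (vanishing_ideal S) \<subseteq> convex hull S"
proof
  fix p assume p: "p \<in> theta_body 1 (vanishing_ideal S)"
  show "p \<in> convex hull S"
  proof (cases "S = {}")
    case True
    define l where "l = (\<lambda>x::real^'n. 0 \<bullet> x + (-1))"
    have "k_sos_mod 1 (vanishing_ideal S) l" unfolding l_def using True
      by (intro vanish_sos is_poly_affine) auto
    moreover have "poly_deg_le 1 l" unfolding l_def by (rule poly_affine)
    ultimately have "l p \<ge> 0" using p unfolding theta_body_def by blast
    then show ?thesis unfolding l_def by simp
  next
    case False
    define P where "P = convex hull S"
    have "polyhedron P" unfolding P_def using fin by (rule polyhedron_convex_hull)
    then obtain F where "finite F" and seq: "P = affine hull P \<inter> \<Inter>F"
             and faces: "\<And>h. h \<in> F \<Longrightarrow> \<exists>a b. a \<noteq> 0 \<and> h = {x. a \<bullet> x \<le> b}"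
             and min: "\<And>F'. F' \<subset> F \<Longrightarrow> P \<subset> (affine hull P) \<inter> \<Inter>F'"
      by (simp add: polyhedron_Int_affine_minimal) meson
    then obtain a b where ab: "\<And>h. h \<in> F \<Longrightarrow> a h \<noteq> 0 \<and> h = {x. a h \<bullet> x \<le> b h}"
      by metis
    have pa: "p \<in> affine hull P" unfolding P_def affine_hull_convex_hull
      by (rule theta_in_affine_hull[OF False p])
    have "p \<in> h" if hF: "h \<in> F" for h
    proof -
      define C where "C = P \<inter> {x. a h \<bullet> x = b h}"
      have "C facet_of P" unfolding C_def
        using facet_of_polyhedron_explicit[OF \<open>finite F\<close> seq ab min] hF by blast
      then have Cf: "C facet_of convex hull S" unfolding P_def .
      obtain H where H1: "\<exists>v. H = (\<lambda>x. v + x) ` (affine hull C)" and H2: "S \<subseteq> C \<union> H"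
        using rhs[rule_format, OF Cf] by blast
      obtain v where Hv1: "H = (\<lambda>x. v + x) ` (affine hull C)" using H1 by blast
      note Hv = Hv1 H2
      have Chyp: "affine hull C \<subseteq> {x. a h \<bullet> x = b h}"
        by (rule hull_minimal) (auto simp: C_def affine_hyperplane)
      have Ph: "P \<subseteq> h" using hF by (subst seq) blast
      define l where "l = (\<lambda>x::real^'n. (- a h) \<bullet> x + b h)"
      have two: "\<forall>s\<in>S. (- a h) \<bullet> s + b h = 0 \<or> (- a h) \<bullet> s + b h = - (a h \<bullet> v)"
      proof
        fix s assume s: "s \<in> S"
        show "(- a h) \<bullet> s + b h = 0 \<or> (- a h) \<bullet> s + b h = - (a h \<bullet> v)"
        proof (cases "s \<in> C")
          case True then show ?thesis unfolding C_def by (auto simp: inner_minus_left)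
        next
          case False
          with s H2 have "s \<in> H" by blast
          with Hv1 obtain y where y: "y \<in> affine hull C" "s = v + y" by blast
          from y(1) Chyp have "a h \<bullet> y = b h" by blast
          with y(2) show ?thesis by (simp add: inner_add_right inner_minus_left)
        qed
      qed
      have nn: "\<forall>s\<in>S. (- a h) \<bullet> s + b h \<ge> 0"
      proof
        fix s assume "s \<in> S"
        then have "s \<in> P" unfolding P_def by (rule hull_inc)
        with Ph ab[OF hF] show "(- a h) \<bullet> s + b h \<ge> 0" by auto
      qed
      have "k_sos_mod 1 (vanishing_ideal S) l" unfolding l_def by (rule two_valued_sos[OF two nn])
      moreover have "poly_deg_le 1 l" unfolding l_def by (rule poly_affine)
      ultimately have "l p \<ge> 0" using p unfolding theta_body_def by blast
      then have "a h \<bullet> p \<le> b h" unfolding l_def by (simp add: inner_minus_left)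
      then show "p \<in> h" using ab[OF hF] by blast
    qed
    with pa have "p \<in> P" by (subst seq) blast
    then show ?thesis unfolding P_def .
  qed
qed



lemma small_zero:
  fixes z A :: real
  assumes "z \<ge> 0" "\<forall>e. 0 < e \<and> e \<le> 1 \<longrightarrow> z \<le> A * e"
  shows "z = 0"
proof (rule ccontr)
  assume "z \<noteq> 0"
  with assms have z: "z > 0" by simp
  have A: "A > 0" using assms(2)[rule_format, of 1] z by simp
  define e where "e = min 1 (z / (2 * A))"
  have e: "0 < e" "e \<le> 1" using z A by (auto simp: e_def)
  have "A * e \<le> A * (z / (2 * A))" using A by (intro mult_left_mono) (auto simp: e_def)
  also have "\<dots> = z / 2" using A by simp
  finally show False using assms(2) e z by force
qed

lemma final_lim:
  fixes r K K2 :: real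
  assumes K: "K \<ge> 0" "K2 \<ge> 0"
    and H: "\<forall>t. 0 < t \<and> t \<le> 1 \<longrightarrow> (\<exists>X\<ge>0. \<bar>X - r\<bar> \<le> K * t \<and> \<bar>sqrt X - \<bar>r\<bar>\<bar> \<le> K2 * sqrt t)"
  shows "r * r = r"
proof -
  define A where "A = K + K2 * (2 * \<bar>r\<bar> + K2)"
  have "\<bar>r * r - r\<bar> \<le> A * e" if e: "0 < e" "e \<le> 1" for e
  proof -
    have t: "0 < e*e" "e*e \<le> 1" using e by (auto simp: mult_le_one)
    obtain X where X: "X \<ge> 0" "\<bar>X - r\<bar> \<le> K * (e*e)" "\<bar>sqrt X - \<bar>r\<bar>\<bar> \<le> K2 * sqrt (e*e)"
      using H t by blast
    have se: "sqrt (e*e) = e" using e by simp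
    let ?y = "sqrt X"
    have Xy: "X = ?y * ?y" using X(1) by (simp add: real_sqrt_mult[symmetric])
    have y0: "?y \<ge> 0" using X(1) by simp
    have d: "\<bar>?y - \<bar>r\<bar>\<bar> \<le> K2 * e" using X(3) se by simp
    have "r * r - X = (\<bar>r\<bar> - ?y) * (\<bar>r\<bar> + ?y)"
      by (subst Xy) (simp add: algebra_simps abs_mult_self_eq)
    then have "\<bar>r * r - X\<bar> = \<bar>\<bar>r\<bar> - ?y\<bar> * (\<bar>r\<bar> + ?y)"
      using y0 by (simp add: abs_mult)
    also have "\<dots> \<le> (K2 * e) * (2 * \<bar>r\<bar> + K2 * e)"
      using d y0 K e by (intro mult_mono) (auto simp: abs_le_iff)
    also have "\<dots> \<le> (K2 * e) * (2 * \<bar>r\<bar> + K2)"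
      using K e by (intro mult_left_mono add_left_mono) (auto simp: mult_left_le)
    finally have 1: "\<bar>r * r - X\<bar> \<le> K2 * (2 * \<bar>r\<bar> + K2) * e" by (simp add: algebra_simps)
    have "K * (e * e) \<le> K * e" using K e by (intro mult_left_mono) (auto simp: mult_le_cancel_left1)
    with X(2) have 2: "\<bar>X - r\<bar> \<le> K * e" by linarith
    have "\<bar>r * r - r\<bar> \<le> \<bar>r * r - X\<bar> + \<bar>X - r\<bar>" by linarith
    also have "\<dots> \<le> A * e" using 1 2 by (simp add: A_def algebra_simps)
    finally show ?thesis .
  qed
  then have "\<bar>r * r - r\<bar> = 0" by (intro small_zero) auto
  then show ?thesis by simp
qed

lemma L2_set_scale: "L2_set (\<lambda>i. c * h i) I = \<bar>c\<bar> * L2_set h I"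
  unfolding L2_set_def by (simp add: power_mult_distrib real_sqrt_mult flip: sum_distrib_left)

lemma L2_set_sum_le:
  assumes "finite T"
  shows "L2_set (\<lambda>i. \<Sum>f\<in>T. h f i) I \<le> (\<Sum>f\<in>T. L2_set (h f) I)"
  using assms
proof (induction T rule: finite_induct)
  case empty then show ?case by (simp add: L2_set_def)
next
  case (insert x T)
  have "L2_set (\<lambda>i. \<Sum>f\<in>insert x T. h f i) I = L2_set (\<lambda>i. h x i + (\<Sum>f\<in>T. h f i)) I"
    using insert by simp
  also have "\<dots> \<le> L2_set (h x) I + L2_set (\<lambda>i. \<Sum>f\<in>T. h f i) I" by (rule L2_set_triangle_ineq)
  also have "\<dots> \<le> L2_set (h x) I + (\<Sum>f\<in>T. L2_set (h f) I)" using insert by simp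
  finally show ?case using insert by simp
qed



lemma key:
  fixes T :: "(real^'n::finite) set" and sstar s q :: "real^'n" and \<mu> :: "real^'n \<Rightarrow> real"
  assumes finT: "finite T" "T \<noteq> {}" "sstar \<notin> T"
    and mu: "sum \<mu> (insert sstar T) = 1" "(\<Sum>v\<in>insert sstar T. \<mu> v *\<^sub>R v) = s"
    and q: "q = (\<Sum>f\<in>T. (1 / real (card T)) *\<^sub>R f)"
    and H: "\<forall>t. 0 < t \<and> t \<le> 1 \<longrightarrow> (\<exists>l gs. affn l \<and> (\<forall>g\<in>set gs. affn g) \<and>
            (\<forall>v\<in>insert s (insert sstar T). l v = (\<Sum>g\<leftarrow>gs. (g v)^2)) \<and>
            l ((1+t) *\<^sub>R q - t *\<^sub>R sstar) < 0)"
  shows "\<mu> sstar * \<mu> sstar = \<mu> sstar"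
proof -
  define m where "m = real (card T)"
  have m0: "m > 0" using finT by (simp add: m_def card_gt_0_iff)
  define M where "M = (\<Sum>f\<in>T. \<bar>\<mu> f\<bar>)"
  have M0: "M \<ge> 0" unfolding M_def by (simp add: sum_nonneg)
  define r where "r = \<mu> sstar"
  have sumT: "sum \<mu> T = 1 - r" using mu(1) finT by (simp add: r_def)
  show ?thesis unfolding r_def[symmetric]
  proof (rule final_lim[of "M * m" "M * sqrt m"])
    show "0 \<le> M * m" "0 \<le> M * sqrt m" using M0 m0 by auto
    show "\<forall>t. 0 < t \<and> t \<le> 1 \<longrightarrow> (\<exists>X\<ge>0. \<bar>X - r\<bar> \<le> M * m * t \<and> \<bar>sqrt X - \<bar>r\<bar>\<bar> \<le> M * sqrt m * sqrt t)"
    proof (intro allI impI)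
      fix t :: real assume t: "0 < t \<and> t \<le> 1"
      then obtain l gs where l: "affn l" and gs: "\<forall>g\<in>set gs. affn g"
        and sq: "\<forall>v\<in>insert s (insert sstar T). l v = (\<Sum>g\<leftarrow>gs. (g v)^2)"
        and neg: "l ((1+t) *\<^sub>R q - t *\<^sub>R sstar) < 0"
        using H by blast
      define n where "n = length gs"
      define G where "G i = gs ! i" for i
      define N where "N v = L2_set (\<lambda>i. G i v) {..<n}" for v
      have Gaff: "affn (G i)" if "i < n" for i
        using gs that unfolding G_def n_def by auto
      have lN: "l v = (N v)^2" if "v \<in> insert s (insert sstar T)" for v
      proof -
        have "l v = (\<Sum>g\<leftarrow>gs. (g v)^2)" using sq that by blast
        also have "\<dots> = (\<Sum>i<n. (G i v)^2)"
          unfolding G_def n_def by (simp add: sum_list_sum_nth atLeast0LessThan)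
        finally have "l v = (\<Sum>i<n. (G i v)^2)" .
        then show ?thesis unfolding N_def L2_set_def by (simp add: sum_nonneg)
      qed
      have Nsq: "N v = sqrt (l v)" if "v \<in> insert s (insert sstar T)" for v
        using lN[OF that] by (simp add: N_def)
      have lnn: "l v \<ge> 0" if "v \<in> insert s (insert sstar T)" for v
        using lN[OF that] by simp
      obtain \<alpha> \<beta> where ab: "l = (\<lambda>x. \<alpha> \<bullet> x + \<beta>)" using l unfolding affn_def by blast
      have lp: "l ((1+t) *\<^sub>R q - t *\<^sub>R sstar) = (1+t) * l q - t * l sstar"
        unfolding ab by (simp add: inner_diff_right algebra_simps)
      have lq: "l q = (\<Sum>f\<in>T. (1 / m) * l f)"
        unfolding q m_def[symmetric] using affn_comb[OF l finT(1), of "\<lambda>_. 1 / m"] m0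
        by (simp add: m_def)
      have lqT: "(\<Sum>f\<in>T. l f) = m * l q"
        unfolding lq using m0 by (simp add: sum_distrib_left)
      have lq0: "l q \<ge> 0" unfolding lq using lnn m0 by (intro sum_nonneg) auto
      define L where "L = l sstar"
      have L0: "L > 0"
      proof -
        have "(1+t) * l q - t * L < 0" using neg lp L_def by simp
        moreover have "(1+t) * l q \<ge> 0" using lq0 t by simp
        ultimately have "t * L > 0" by linarith
        then show ?thesis using t by (simp add: zero_less_mult_iff)
      qed
      have lqL: "(1+t) * l q < t * L" using neg lp L_def by simp
      have lf_le: "l f \<le> m * t * L" if f: "f \<in> T" for f
      proof -
        have "l f \<le> (\<Sum>f\<in>T. l f)"
          using f finT lnn by (intro member_le_sum) auto
        also have "\<dots> = m * l q" by (rule lqT)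
        also have "\<dots> \<le> m * ((1+t) * l q)" using m0 lq0 t by (intro mult_left_mono) (auto simp: algebra_simps)
        also have "\<dots> \<le> m * (t * L)" using m0 lqL by (intro mult_left_mono) auto
        finally show ?thesis by simp
      qed
      have ls: "l s = r * L + (\<Sum>f\<in>T. \<mu> f * l f)"
        using affn_comb[OF l finite.insertI[OF finT(1)] mu(1)] mu(2) finT
        by (simp add: r_def L_def)
      have bound1: "\<bar>l s - r * L\<bar> \<le> M * m * t * L"
      proof -
        have "\<bar>l s - r * L\<bar> = \<bar>\<Sum>f\<in>T. \<mu> f * l f\<bar>" using ls by simp
        also have "\<dots> \<le> (\<Sum>f\<in>T. \<bar>\<mu> f * l f\<bar>)" by (rule sum_abs)
        also have "\<dots> \<le> (\<Sum>f\<in>T. \<bar>\<mu> f\<bar> * (m * t * L))"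
          using lf_le lnn by (intro sum_mono) (auto simp: abs_mult intro!: mult_left_mono)
        also have "\<dots> = M * (m * t * L)" unfolding M_def by (rule sum_distrib_right[symmetric])
        also have "\<dots> = M * m * t * L" by simp
        finally show ?thesis .
      qed
      have Gs: "G i s = r * G i sstar + (\<Sum>f\<in>T. \<mu> f * G i f)" if "i < n" for i
        using affn_comb[OF Gaff[OF that] finite.insertI[OF finT(1)] mu(1)] mu(2) finT
        by (simp add: r_def)
      define E where "E = (\<Sum>f\<in>T. \<bar>\<mu> f\<bar> * N f)"
      have E: "E \<le> M * sqrt (m * t * L)"
      proof -
        have "E \<le> (\<Sum>f\<in>T. \<bar>\<mu> f\<bar> * sqrt (m * t * L))"
          unfolding E_def using lf_le Nsq by (intro sum_mono mult_left_mono) auto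
        then show ?thesis unfolding M_def by (simp add: sum_distrib_right)
      qed
      have NT: "L2_set (\<lambda>i. \<Sum>f\<in>T. c f * G i f) {..<n} \<le> (\<Sum>f\<in>T. \<bar>c f\<bar> * N f)" for c
      proof -
        have "L2_set (\<lambda>i. \<Sum>f\<in>T. c f * G i f) {..<n} \<le> (\<Sum>f\<in>T. L2_set (\<lambda>i. c f * G i f) {..<n})"
          by (rule L2_set_sum_le[OF finT(1)])
        also have "\<dots> = (\<Sum>f\<in>T. \<bar>c f\<bar> * N f)" unfolding N_def L2_set_scale ..
        finally show ?thesis .
      qed
      have up: "N s \<le> \<bar>r\<bar> * N sstar + E"
      proof -
        have "N s = L2_set (\<lambda>i. r * G i sstar + (\<Sum>f\<in>T. \<mu> f * G i f)) {..<n}"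
          unfolding N_def by (intro L2_set_cong) (auto simp: Gs)
        also have "\<dots> \<le> L2_set (\<lambda>i. r * G i sstar) {..<n} + L2_set (\<lambda>i. \<Sum>f\<in>T. \<mu> f * G i f) {..<n}"
          by (rule L2_set_triangle_ineq)
        also have "\<dots> \<le> \<bar>r\<bar> * N sstar + E"
          using NT[of \<mu>] unfolding E_def N_def L2_set_scale by simp
        finally show ?thesis .
      qed
      have down: "\<bar>r\<bar> * N sstar \<le> N s + E"
      proof -
        have "\<bar>r\<bar> * N sstar = L2_set (\<lambda>i. G i s + (\<Sum>f\<in>T. (- \<mu> f) * G i f)) {..<n}"
          unfolding N_def L2_set_scale[symmetric]
          by (intro L2_set_cong) (auto simp: Gs sum_negf)
        also have "\<dots> \<le> L2_set (\<lambda>i. G i s) {..<n} + L2_set (\<lambda>i. \<Sum>f\<in>T. (- \<mu> f) * G i f) {..<n}"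
          by (rule L2_set_triangle_ineq)
        also have "\<dots> \<le> N s + E"
          using NT[of "\<lambda>f. - \<mu> f"] unfolding E_def N_def by simp
        finally show ?thesis .
      qed
      have NsL: "N sstar = sqrt L" using Nsq L_def by simp
      define X where "X = l s / L"
      have X0: "X \<ge> 0" unfolding X_def using lnn L0 by simp
      have b1: "\<bar>X - r\<bar> \<le> M * m * t"
      proof -
        have "\<bar>X - r\<bar> = \<bar>l s - r * L\<bar> / L" unfolding X_def using L0
          by (simp add: field_simps abs_div)
        also have "\<dots> \<le> M * m * t * L / L" using bound1 L0 by (intro divide_right_mono) auto
        finally show ?thesis using L0 by simp
      qed
      have sX: "sqrt X = N s / sqrt L" unfolding X_def using Nsq by (simp add: real_sqrt_divide)
      have b2: "\<bar>sqrt X - \<bar>r\<bar>\<bar> \<le> M * sqrt m * sqrt t"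
      proof -
        have sL: "sqrt L > 0" using L0 by simp
        have "\<bar>N s - \<bar>r\<bar> * sqrt L\<bar> \<le> E" using up down unfolding NsL by linarith
        also have "\<dots> \<le> M * sqrt (m * t * L)" by (rule E)
        also have "\<dots> = M * sqrt m * sqrt t * sqrt L" by (simp add: real_sqrt_mult)
        finally have "\<bar>N s - \<bar>r\<bar> * sqrt L\<bar> / sqrt L \<le> M * sqrt m * sqrt t"
          using sL by (simp add: divide_le_eq)
        moreover have "\<bar>N s - \<bar>r\<bar> * sqrt L\<bar> / sqrt L = \<bar>sqrt X - \<bar>r\<bar>\<bar>"
          unfolding sX using sL by (simp add: field_simps abs_div)
        ultimately show ?thesis by simp
      qed
      show "\<exists>X\<ge>0. \<bar>X - r\<bar> \<le> M * m * t \<and> \<bar>sqrt X - \<bar>r\<bar>\<bar> \<le> M * sqrt m * sqrt t"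
        using X0 b1 b2 by blast
    qed
  qed
qed



lemma forward:
  fixes S :: "(real^'n::finite) set"
  assumes fin: "finite S" and th: "theta_body 1 (vanishing_ideal S) \<subseteq> convex hull S"
    and Ff: "F facet_of convex hull S"
  shows "\<exists>H. (\<exists>v. H = (\<lambda>x. v + x) ` (affine hull F)) \<and> H \<subseteq> affine hull S \<and> S \<subseteq> F \<union> H"
proof -
  define P where "P = convex hull S"
  have polyP: "polyhedron P" using fin by (simp add: P_def polyhedron_convex_hull)
  have FfP: "F facet_of P" using Ff by (simp add: P_def)
  obtain a b where a: "a \<noteq> 0" "P \<subseteq> {x. a \<bullet> x \<le> b}" "F = P \<inter> {x. a \<bullet> x = b}"
    by (rule facet_of_polyhedron[OF polyP FfP])
  obtain T where T: "T \<subseteq> S" "F = convex hull T"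
    using face_of_convex_hull_subset[OF finite_imp_compact[OF fin] facet_of_imp_face_of[OF Ff]] by blast
  have finT: "finite T" using T(1) fin by (rule finite_subset)
  have Tne: "T \<noteq> {}" using Ff T(2) by (auto simp: facet_of_def)
  have TF: "T \<subseteq> F" unfolding T(2) by (rule hull_subset)
  have FP: "F \<subseteq> P" using a(3) by blast
  have hypT: "affine hull T \<subseteq> {x. a \<bullet> x = b}"
    by (rule hull_minimal) (use TF a(3) in \<open>auto simp: affine_hyperplane\<close>)
  obtain sstar where ss: "sstar \<in> S" "sstar \<notin> F"
  proof (rule ccontr)
    assume "\<not> thesis"
    with that have SF: "S \<subseteq> F" by blast
    have "convex F" using facet_of_imp_face_of[OF Ff] by (rule face_of_imp_convex)
    then have "P \<subseteq> F" unfolding P_def using SF by (rule hull_minimal[rotated])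
    with FP have "F = P" by blast
    with FfP show False by simp
  qed
  have ssP: "sstar \<in> P" unfolding P_def using ss(1) by (rule hull_inc)
  have cstar: "a \<bullet> sstar < b"
  proof -
    have "a \<bullet> sstar \<le> b" using ssP a(2) by blast
    moreover have "a \<bullet> sstar \<noteq> b" using ssP ss(2) a(3) by blast
    ultimately show ?thesis by simp
  qed
  have ssT: "sstar \<notin> affine hull T" using hypT cstar by fastforce
  have ssT': "sstar \<notin> T" using ssT hull_inc[of sstar T affine] by blast
  have affS: "affine hull (insert sstar T) = affine hull S"
  proof -
    have "aff_dim (insert sstar T) = aff_dim T + 1" using ssT by (simp add: aff_dim_insert)
    also have "aff_dim T = aff_dim F" unfolding T(2) by (simp add: aff_dim_convex_hull)
    also have "aff_dim F = aff_dim P - 1" using FfP by (simp add: facet_of_def)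
    also have "aff_dim P = aff_dim S" unfolding P_def by (simp add: aff_dim_convex_hull)
    finally have "aff_dim (insert sstar T) = aff_dim S" by simp
    moreover have "insert sstar T \<subseteq> S" using ss(1) T(1) by blast
    ultimately show ?thesis using aff_dim_eq_full_gen by blast
  qed
  have finU: "finite (insert sstar T)" using finT by simp
  have "\<forall>s\<in>S. \<exists>u. sum u (insert sstar T) = 1 \<and> (\<Sum>v\<in>insert sstar T. u v *\<^sub>R v) = s"
  proof
    fix s assume "s \<in> S"
    then have "s \<in> affine hull (insert sstar T)" unfolding affS by (rule hull_inc)
    then show "\<exists>u. sum u (insert sstar T) = 1 \<and> (\<Sum>v\<in>insert sstar T. u v *\<^sub>R v) = s"
      unfolding affine_hull_finite[OF finU] by blast
  qed
  then obtain \<mu> where \<mu>: "\<And>s. s \<in> S \<Longrightarrow> sum (\<mu> s) (insert sstar T) = 1 \<and> (\<Sum>v\<in>insert sstar T. \<mu> s v *\<^sub>R v) = s"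
    by metis
  define q where "q = (\<Sum>f\<in>T. (1 / real (card T)) *\<^sub>R f)"
  have qT: "q \<in> affine hull T"
    unfolding affine_hull_finite[OF finT] q_def using Tne finT
    by (intro CollectI exI[of _ "\<lambda>_. 1 / real (card T)"]) (simp add: card_gt_0_iff)
  have aq: "a \<bullet> q = b" using qT hypT by blast
  have Hyp: "\<exists>l gs. affn l \<and> (\<forall>g\<in>set gs. affn g) \<and>
            (\<forall>v\<in>S. l v = (\<Sum>g\<leftarrow>gs. (g v)^2)) \<and> l ((1+t) *\<^sub>R q - t *\<^sub>R sstar) < 0"
    if t: "0 < t" for t
  proof -
    define p where "p = (1+t) *\<^sub>R q - t *\<^sub>R sstar"
    have "a \<bullet> p = (1+t) * b - t * (a \<bullet> sstar)" unfolding p_def using aq by (simp add: inner_diff_right)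
    also have "\<dots> > b" using t cstar by (simp add: algebra_simps)
    finally have "p \<notin> P" using a(2) by auto
    then have "p \<notin> theta_body 1 (vanishing_ideal S)" using th unfolding P_def by blast
    then obtain l where l: "poly_deg_le 1 l" "k_sos_mod 1 (vanishing_ideal S) l" "\<not> l p \<ge> 0"
      unfolding theta_body_def by blast
    obtain gs where gs: "\<forall>g\<in>set gs. poly_deg_le 1 g" "(\<lambda>x. l x - (\<Sum>g\<leftarrow>gs. (g x)^2)) \<in> vanishing_ideal S"
      using l(2) unfolding k_sos_mod_def by blast
    have "\<forall>v\<in>S. l v = (\<Sum>g\<leftarrow>gs. (g v)^2)" using gs(2) unfolding vanishing_ideal_def by auto
    moreover have "affn l" using l(1) by (rule deg1_affn)
    moreover have "\<forall>g\<in>set gs. affn g" using gs(1) deg1_affn by blast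
    ultimately show ?thesis using l(3) unfolding p_def by (intro exI[of _ l] exI[of _ gs]) auto
  qed
  have r01: "\<mu> s sstar * \<mu> s sstar = \<mu> s sstar" if s: "s \<in> S" for s
  proof (rule key[OF finT Tne ssT' conjunct1[OF \<mu>[OF s]] conjunct2[OF \<mu>[OF s]] q_def])
    have sub: "insert s (insert sstar T) \<subseteq> S" using s ss(1) T(1) by blast
    show "\<forall>t. 0 < t \<and> t \<le> 1 \<longrightarrow> (\<exists>l gs. affn l \<and> (\<forall>g\<in>set gs. affn g) \<and>
            (\<forall>v\<in>insert s (insert sstar T). l v = (\<Sum>g\<leftarrow>gs. (g v)^2)) \<and>
            l ((1+t) *\<^sub>R q - t *\<^sub>R sstar) < 0)"
    proof (intro allI impI)
      fix t :: real assume "0 < t \<and> t \<le> 1"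
      then obtain l gs where "affn l" "\<forall>g\<in>set gs. affn g" "\<forall>v\<in>S. l v = (\<Sum>g\<leftarrow>gs. (g v)^2)"
         "l ((1+t) *\<^sub>R q - t *\<^sub>R sstar) < 0" using Hyp by blast
      then show "\<exists>l gs. affn l \<and> (\<forall>g\<in>set gs. affn g) \<and>
            (\<forall>v\<in>insert s (insert sstar T). l v = (\<Sum>g\<leftarrow>gs. (g v)^2)) \<and>
            l ((1+t) *\<^sub>R q - t *\<^sub>R sstar) < 0" using sub by blast
    qed
  qed
  obtain f0 where f0: "f0 \<in> T" using Tne by blast
  define v where "v = sstar - f0"
  define H where "H = (\<lambda>x. v + x) ` (affine hull F)"
  have affF: "affine hull F = affine hull T" unfolding T(2) by simp
  have HS: "H \<subseteq> affine hull S"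
  proof
    fix z assume "z \<in> H"
    then obtain y where y: "y \<in> affine hull T" "z = v + y" unfolding H_def affF by blast
    have "affine hull T \<subseteq> affine hull S" using T(1) by (rule hull_mono)
    then have yS: "y \<in> affine hull S" using y(1) by blast
    have sS: "sstar \<in> affine hull S" using ss(1) by (rule hull_inc)
    have fS: "f0 \<in> affine hull S" using f0 T(1) hull_inc[of f0 S affine] by blast
    have "y + 1 *\<^sub>R (sstar - f0) \<in> affine hull S"
      by (rule mem_affine_3_minus[OF affine_affine_hull yS sS fS])
    moreover have "z = y + 1 *\<^sub>R (sstar - f0)" using y(2) by (simp add: v_def)
    ultimately show "z \<in> affine hull S" by simp
  qed
  have SFH: "S \<subseteq> F \<union> H"
  proof
    fix s assume s: "s \<in> S"
    define r where "r = \<mu> s sstar"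
    have r: "r = 0 \<or> r = 1" using r01[OF s] unfolding r_def
      by (metis mult_cancel_right1 mult_zero_left)
    have sum1: "sum (\<mu> s) (insert sstar T) = 1" and comb: "(\<Sum>v\<in>insert sstar T. \<mu> s v *\<^sub>R v) = s"
      using \<mu>[OF s] by auto
    have sumT: "sum (\<mu> s) T = 1 - r" using sum1 finT ssT' by (simp add: r_def)
    have combT: "s = r *\<^sub>R sstar + (\<Sum>f\<in>T. \<mu> s f *\<^sub>R f)" using comb finT ssT' by (simp add: r_def)
    show "s \<in> F \<union> H"
    proof (cases "r = 0")
      case True
      have "affn (\<lambda>x. a \<bullet> x + 0)" unfolding affn_def by blast
      then have "a \<bullet> s = (\<Sum>v\<in>insert sstar T. \<mu> s v * (a \<bullet> v))"
        using affn_comb[OF _ finU sum1, of "\<lambda>x. a \<bullet> x + 0"] comb by simp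
      also have "\<dots> = r * (a \<bullet> sstar) + (\<Sum>f\<in>T. \<mu> s f * (a \<bullet> f))" using finT ssT' by (simp add: r_def)
      also have "(\<Sum>f\<in>T. \<mu> s f * (a \<bullet> f)) = (\<Sum>f\<in>T. \<mu> s f * b)"
        using TF a(3) by (intro sum.cong) auto
      also have "\<dots> = (1 - r) * b" using sumT by (simp add: sum_distrib_right[symmetric])
      finally have "a \<bullet> s = b" using True by simp
      moreover have "s \<in> P" unfolding P_def using s by (rule hull_inc)
      ultimately show ?thesis using a(3) by blast
    next
      case False
      with r have r1: "r = 1" by simp
      define u where "u f = \<mu> s f + (if f = f0 then 1 else 0)" for f
      have "sum u T = 1" unfolding u_def using sumT r1 f0 finT by (simp add: sum.distrib)
      moreover have "(\<Sum>f\<in>T. u f *\<^sub>R f) = f0 + (\<Sum>f\<in>T. \<mu> s f *\<^sub>R f)"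
      proof -
        have "(\<Sum>f\<in>T. u f *\<^sub>R f) = (\<Sum>f\<in>T. \<mu> s f *\<^sub>R f + (if f = f0 then f0 else 0))"
          by (intro sum.cong) (auto simp: u_def scaleR_add_left)
        also have "\<dots> = (\<Sum>f\<in>T. \<mu> s f *\<^sub>R f) + (\<Sum>f\<in>T. (if f = f0 then f0 else 0))"
          by (rule sum.distrib)
        also have "(\<Sum>f\<in>T. (if f = f0 then f0 else 0)) = f0" using f0 finT by simp
        finally show ?thesis by simp
      qed
      ultimately have "f0 + (\<Sum>f\<in>T. \<mu> s f *\<^sub>R f) \<in> affine hull T"
        unfolding affine_hull_finite[OF finT] by blast
      moreover have "s = v + (f0 + (\<Sum>f\<in>T. \<mu> s f *\<^sub>R f))" using combT r1 by (simp add: v_def)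
      ultimately have "s \<in> H" unfolding H_def affF by blast
      then show ?thesis by blast
    qed
  qed
  show ?thesis using HS SFH unfolding H_def by blast
qed


theorem mainTheorem15:
  fixes S :: "(real^'n) set"
  assumes "finite S"
  shows "TH_exact 1 (vanishing_ideal S) \<longleftrightarrow>
    (\<forall>F. F facet_of (convex hull S) \<longrightarrow>
       (\<exists>H. (\<exists>v. H = (\<lambda>x. v + x) ` (affine hull F)) \<and> H \<subseteq> affine hull S \<and>
            S \<subseteq> F \<union> H))"
proof
  assume "TH_exact 1 (vanishing_ideal S)"
  then have th: "theta_body 1 (vanishing_ideal S) \<subseteq> convex hull S"
    using TH_exact_iff[OF assms] by simp
  show "\<forall>F. F facet_of (convex hull S) \<longrightarrow>
       (\<exists>H. (\<exists>v. H = (\<lambda>x. v + x) ` (affine hull F)) \<and> H \<subseteq> affine hull S \<and>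
            S \<subseteq> F \<union> H)"
    using forward[OF assms th] by blast
next
  assume "\<forall>F. F facet_of (convex hull S) \<longrightarrow>
       (\<exists>H. (\<exists>v. H = (\<lambda>x. v + x) ` (affine hull F)) \<and> H \<subseteq> affine hull S \<and>
            S \<subseteq> F \<union> H)"
  then have "theta_body 1 (vanishing_ideal S) \<subseteq> convex hull S" by (rule backward[OF assms])
  then show "TH_exact 1 (vanishing_ideal S)" using TH_exact_iff[OF assms] by simp
qed

end
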